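(* Let $\mathcal B$ be an extriangulated category with enough projectives and enough injectives, let $\mathcal D\subseteq\mathcal C$ be subcategories satisfying (RCP), and let $\mathcal H/\mathcal C$ be the heart of the cotorsion pair $(\mathcal C,\mathcal C^{\perp_1})$. If $\overline f:Y\to X$ is an epimorphism in $\mathcal H/\mathcal C$ with $X,Y\in\mathcal H$ and $Y\in\mathcal D^{\perp_1}$, then $X\in\mathcal D^{\perp_1}$. In other words, the full subcategory $\mathcal A$ of $\mathcal H/\mathcal C$ on objects of $\mathcal H\cap\mathcal D^{\perp_1}$ is closed under epimorphic images (quotients).
   Context: $(\mathcal B,\mathbb E,\mathfrak s)$ is an extriangulated category (Nakaoka–Palu); conflations $A\rightarrowtail B\twoheadrightarrow C$. Subcategories are full, additive, closed under isomorphisms and finite direct sums. $\mathcal P$ = projectives. $\mathcal X^{\perp_1}=\{B\mid\mathbb E(\mathcal X,B)=0\}$; rigid means $\mathbb E(\mathcal X,\mathcal X)=0$. (RCP): $\mathcal P\subseteq\mathcal C$, $\mathcal C$ rigid, contravariantly finite, closed under direct summands; then $(\mathcal C,\mathcal C^{\perp_1})$ is a cotorsion pair. For a cotorsion pair $(\mathcal U,\mathcal V)$, $\mathcal H$ is the subcategory of objects $B$ admitting conflations $V_B\rightarrowtail U_B\twoheadrightarrow B$, $B\rightarrowtail V^B\twoheadrightarrow U^B$ with $V_B\in\mathcal V$, $U^B\in\mathcal U$, $U_B,V^B\in\mathcal U\cap\mathcal V$; the heart is the abelian ideal quotient $\mathcal H/(\mathcal U\cap\mathcal V)$, here $\mathcal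 H/\mathcal C$. *)

theory Defs
  imports Main
begin

text \<open>
  Objects are all elements of type 'o.  Morphisms live in type 'm with
  hom-sets Hom X Y (pairwise disjoint, as in the usual definition of a category),
  composition Cmp g f (g after f), identities, and the abelian group structure
  on hom-sets (Addm, Negm, Zerom X Y).
  The bifunctor E is given by the sets Ext C A (= E(C,A)) of elements of type 'e
  (pairwise disjoint), their abelian group structure, and the actions
  Push a (= a_*) and Pull c (= c^*).
  The realization s is given by the relation Real:  Real delta x y  means that the
  sequence  A --x--> M --y--> C  belongs to the class s(delta).
\<close>

record ('o,'m,'e) extri =
  Hom   :: "'o \<Rightarrow> 'o \<Rightarrow> 'm set"
  Cmp   :: "'m \<Rightarrow> 'm \<Rightarrow> 'm"
  Idm   :: "'o \<Rightarrow> 'm"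
  Addm  :: "'m \<Rightarrow> 'm \<Rightarrow> 'm"
  Negm  :: "'m \<Rightarrow> 'm"
  Zerom :: "'o \<Rightarrow> 'o \<Rightarrow> 'm"
  Ext   :: "'o \<Rightarrow> 'o \<Rightarrow> 'e set"
  Adde  :: "'e \<Rightarrow> 'e \<Rightarrow> 'e"
  Nege  :: "'e \<Rightarrow> 'e"
  Zeroe :: "'o \<Rightarrow> 'o \<Rightarrow> 'e"
  Push  :: "'m \<Rightarrow> 'e \<Rightarrow> 'e"
  Pull  :: "'m \<Rightarrow> 'e \<Rightarrow> 'e"
  Real  :: "'e \<Rightarrow> 'm \<Rightarrow> 'm \<Rightarrow> bool"

definition category :: "('o,'m,'e) extri \<Rightarrow> bool" where
"category B \<longleftrightarrow>
  (\<forall>X. Idm B X \<in> Hom B X X) \<and>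
  (\<forall>X Y Z f g. f \<in> Hom B X Y \<longrightarrow> g \<in> Hom B Y Z \<longrightarrow> Cmp B g f \<in> Hom B X Z) \<and>
  (\<forall>X Y f. f \<in> Hom B X Y \<longrightarrow> Cmp B (Idm B Y) f = f \<and> Cmp B f (Idm B X) = f) \<and>
  (\<forall>W X Y Z f g h. f \<in> Hom B W X \<longrightarrow> g \<in> Hom B X Y \<longrightarrow> h \<in> Hom B Y Z \<longrightarrow>
      Cmp B h (Cmp B g f) = Cmp B (Cmp B h g) f) \<and>
  (\<forall>X Y X' Y' f. f \<in> Hom B X Y \<longrightarrow> f \<in> Hom B X' Y' \<longrightarrow> X = X' \<and> Y = Y')"

definition preadditive :: "('o,'m,'e) extri \<Rightarrow> bool" where
"preadditive B \<longleftrightarrow>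
  (\<forall>X Y. Zerom B X Y \<in> Hom B X Y \<and>
     (\<forall>f\<in>Hom B X Y. \<forall>g\<in>Hom B X Y. Addm B f g \<in> Hom B X Y) \<and>
     (\<forall>f\<in>Hom B X Y. Negm B f \<in> Hom B X Y) \<and>
     (\<forall>f\<in>Hom B X Y. \<forall>g\<in>Hom B X Y. \<forall>h\<in>Hom B X Y.
         Addm B (Addm B f g) h = Addm B f (Addm B g h)) \<and>
     (\<forall>f\<in>Hom B X Y. \<forall>g\<in>Hom B X Y. Addm B f g = Addm B g f) \<and>
     (\<forall>f\<in>Hom B X Y. Addm B (Zerom B X Y) f = f) \<and>
     (\<forall>f\<in>Hom B X Y. Addm B (Negm B f) f = Zerom B X Y)) \<and>
  (\<forall>X Y Z f f' g. f \<in> Hom B X Y \<longrightarrow> f' \<in> Hom B X Y \<longrightarrow> g \<in> Hom B Y Z \<longrightarrow>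
      Cmp B g (Addm B f f') = Addm B (Cmp B g f) (Cmp B g f')) \<and>
  (\<forall>X Y Z f g g'. f \<in> Hom B X Y \<longrightarrow> g \<in> Hom B Y Z \<longrightarrow> g' \<in> Hom B Y Z \<longrightarrow>
      Cmp B (Addm B g g') f = Addm B (Cmp B g f) (Cmp B g' f))"

definition zero_obj :: "('o,'m,'e) extri \<Rightarrow> 'o \<Rightarrow> bool" where
"zero_obj B Z \<longleftrightarrow> Idm B Z = Zerom B Z Z"

definition biproduct :: "('o,'m,'e) extri \<Rightarrow> 'o \<Rightarrow> 'o \<Rightarrow> 'o \<Rightarrow> 'm \<Rightarrow> 'm \<Rightarrow> 'm \<Rightarrow> 'm \<Rightarrow> bool" where
"biproduct B A1 A2 S i1 i2 p1 p2 \<longleftrightarrow>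
  i1 \<in> Hom B A1 S \<and> i2 \<in> Hom B A2 S \<and> p1 \<in> Hom B S A1 \<and> p2 \<in> Hom B S A2 \<and>
  Cmp B p1 i1 = Idm B A1 \<and> Cmp B p2 i2 = Idm B A2 \<and>
  Cmp B p2 i1 = Zerom B A1 A2 \<and> Cmp B p1 i2 = Zerom B A2 A1 \<and>
  Addm B (Cmp B i1 p1) (Cmp B i2 p2) = Idm B S"

definition additive :: "('o,'m,'e) extri \<Rightarrow> bool" where
"additive B \<longleftrightarrow> category B \<and> preadditive B \<and> (\<exists>Z. zero_obj B Z) \<and>
   (\<forall>A1 A2. \<exists>S i1 i2 p1 p2. biproduct B A1 A2 S i1 i2 p1 p2)"

definition is_iso :: "('o,'m,'e) extri \<Rightarrow> 'o \<Rightarrow> 'o \<Rightarrow> 'm \<Rightarrow> bool" where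
"is_iso B X Y f \<longleftrightarrow> f \<in> Hom B X Y \<and>
   (\<exists>g\<in>Hom B Y X. Cmp B g f = Idm B X \<and> Cmp B f g = Idm B Y)"

definition ET1 :: "('o,'m,'e) extri \<Rightarrow> bool" where
"ET1 B \<longleftrightarrow>
  (\<forall>C A. Zeroe B C A \<in> Ext B C A \<and>
     (\<forall>d\<in>Ext B C A. \<forall>e\<in>Ext B C A. Adde B d e \<in> Ext B C A) \<and>
     (\<forall>d\<in>Ext B C A. Nege B d \<in> Ext B C A) \<and>
     (\<forall>d\<in>Ext B C A. \<forall>e\<in>Ext B C A. \<forall>k\<in>Ext B C A.
         Adde B (Adde B d e) k = Adde B d (Adde B e k)) \<and>
     (\<forall>d\<in>Ext B C A. \<forall>e\<in>Ext B C A. Adde B d e = Adde B e d) \<and>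
     (\<forall>d\<in>Ext B C A. Adde B (Zeroe B C A) d = d) \<and>
     (\<forall>d\<in>Ext B C A. Adde B (Nege B d) d = Zeroe B C A)) \<and>
  (\<forall>C A C' A' d. d \<in> Ext B C A \<longrightarrow> d \<in> Ext B C' A' \<longrightarrow> C = C' \<and> A = A') \<and>
  (\<forall>C A A' a d. a \<in> Hom B A A' \<longrightarrow> d \<in> Ext B C A \<longrightarrow> Push B a d \<in> Ext B C A') \<and>
  (\<forall>C C' A c d. c \<in> Hom B C' C \<longrightarrow> d \<in> Ext B C A \<longrightarrow> Pull B c d \<in> Ext B C' A) \<and>
  (\<forall>C A d. d \<in> Ext B C A \<longrightarrow> Push B (Idm B A) d = d \<and> Pull B (Idm B C) d = d) \<and>
  (\<forall>C A A' A'' a a' d. a \<in> Hom B A A' \<longrightarrow> a' \<in> Hom B A' A'' \<longrightarrow> d \<in> Ext B C A \<longrightarrow>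
      Push B (Cmp B a' a) d = Push B a' (Push B a d)) \<and>
  (\<forall>C C' C'' A c c' d. c \<in> Hom B C' C \<longrightarrow> c' \<in> Hom B C'' C' \<longrightarrow> d \<in> Ext B C A \<longrightarrow>
      Pull B (Cmp B c c') d = Pull B c' (Pull B c d)) \<and>
  (\<forall>C C' A A' a c d. a \<in> Hom B A A' \<longrightarrow> c \<in> Hom B C' C \<longrightarrow> d \<in> Ext B C A \<longrightarrow>
      Push B a (Pull B c d) = Pull B c (Push B a d)) \<and>
  (\<forall>C A A' a d e. a \<in> Hom B A A' \<longrightarrow> d \<in> Ext B C A \<longrightarrow> e \<in> Ext B C A \<longrightarrow>
      Push B a (Adde B d e) = Adde B (Push B a d) (Push B a e)) \<and>
  (\<forall>C C' A c d e. c \<in> Hom B C' C \<longrightarrow> d \<in> Ext B C A \<longrightarrow> e \<in> Ext B C A \<longrightarrow>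
      Pull B c (Adde B d e) = Adde B (Pull B c d) (Pull B c e)) \<and>
  (\<forall>C A A' a a' d. a \<in> Hom B A A' \<longrightarrow> a' \<in> Hom B A A' \<longrightarrow> d \<in> Ext B C A \<longrightarrow>
      Push B (Addm B a a') d = Adde B (Push B a d) (Push B a' d)) \<and>
  (\<forall>C C' A c c' d. c \<in> Hom B C' C \<longrightarrow> c' \<in> Hom B C' C \<longrightarrow> d \<in> Ext B C A \<longrightarrow>
      Pull B (Addm B c c') d = Adde B (Pull B c d) (Pull B c' d))"

definition realizes :: "('o,'m,'e) extri \<Rightarrow> 'e \<Rightarrow> 'o \<Rightarrow> 'o \<Rightarrow> 'o \<Rightarrow> 'm \<Rightarrow> 'm \<Rightarrow> bool" where
"realizes B d A M C x y \<longleftrightarrow>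
   d \<in> Ext B C A \<and> x \<in> Hom B A M \<and> y \<in> Hom B M C \<and> Real B d x y"

definition seq_equiv :: "('o,'m,'e) extri \<Rightarrow> 'o \<Rightarrow> 'o \<Rightarrow> 'o \<Rightarrow> 'm \<Rightarrow> 'm \<Rightarrow> 'm \<Rightarrow> 'm \<Rightarrow> bool" where
"seq_equiv B M M' C x y x' y' \<longleftrightarrow>
   (\<exists>b. is_iso B M M' b \<and> Cmp B b x = x' \<and> Cmp B y' b = y)"

definition ET2 :: "('o,'m,'e) extri \<Rightarrow> bool" where
"ET2 B \<longleftrightarrow>
  \<comment> \<open>s(d) is exactly one equivalence class of sequences A -> M -> C\<close>
  (\<forall>d x y. Real B d x y \<longrightarrow> (\<exists>A M C. realizes B d A M C x y)) \<and>
  (\<forall>C A d. d \<in> Ext B C A \<longrightarrow> (\<exists>M x y. realizes B d A M C x y)) \<and>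
  (\<forall>d A M C x y M' x' y'. realizes B d A M C x y \<longrightarrow> realizes B d A M' C x' y' \<longrightarrow>
      seq_equiv B M M' C x y x' y') \<and>
  (\<forall>d A M C x y M' x' y'. realizes B d A M C x y \<longrightarrow> x' \<in> Hom B A M' \<longrightarrow> y' \<in> Hom B M' C \<longrightarrow>
      seq_equiv B M M' C x y x' y' \<longrightarrow> Real B d x' y') \<and>
  \<comment> \<open>realization property: morphisms of extensions lift\<close>
  (\<forall>d d' A M C x y A' M' C' x' y' a c.
      realizes B d A M C x y \<longrightarrow> realizes B d' A' M' C' x' y' \<longrightarrow>
      a \<in> Hom B A A' \<longrightarrow> c \<in> Hom B C C' \<longrightarrow> Push B a d = Pull B c d' \<longrightarrow>
      (\<exists>b\<in>Hom B M M'. Cmp B b x = Cmp B x' a \<and> Cmp B y' b = Cmp B c y)) \<and>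
  \<comment> \<open>additivity: s(0) is the split sequence\<close>
  (\<forall>A C S i1 i2 p1 p2. biproduct B A C S i1 i2 p1 p2 \<longrightarrow> Real B (Zeroe B C A) i1 p2) \<and>
  \<comment> \<open>additivity: s(d (+) d') = s(d) (+) s(d')\<close>
  (\<forall>d d' A M C x y A' M' C' x' y' SA iA iA' pA pA' SM iM iM' pM pM' SC iC iC' pC pC'.
      realizes B d A M C x y \<longrightarrow> realizes B d' A' M' C' x' y' \<longrightarrow>
      biproduct B A A' SA iA iA' pA pA' \<longrightarrow>
      biproduct B M M' SM iM iM' pM pM' \<longrightarrow>
      biproduct B C C' SC iC iC' pC pC' \<longrightarrow>
      Real B (Adde B (Push B iA (Pull B pC d)) (Push B iA' (Pull B pC' d')))
             (Addm B (Cmp B iM (Cmp B x pA)) (Cmp B iM' (Cmp B x' pA')))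
             (Addm B (Cmp B iC (Cmp B y pM)) (Cmp B iC' (Cmp B y' pM'))))"

definition ET3 :: "('o,'m,'e) extri \<Rightarrow> bool" where
"ET3 B \<longleftrightarrow>
  (\<forall>d d' A M C x y A' M' C' x' y' a b.
      realizes B d A M C x y \<longrightarrow> realizes B d' A' M' C' x' y' \<longrightarrow>
      a \<in> Hom B A A' \<longrightarrow> b \<in> Hom B M M' \<longrightarrow> Cmp B b x = Cmp B x' a \<longrightarrow>
      (\<exists>c\<in>Hom B C C'. Cmp B c y = Cmp B y' b \<and> Push B a d = Pull B c d'))"

definition ET3op :: "('o,'m,'e) extri \<Rightarrow> bool" where
"ET3op B \<longleftrightarrow>
  (\<forall>d d' A M C x y A' M' C' x' y' b c.
      realizes B d A M C x y \<longrightarrow> realizes B d' A' M' C' x' y' \<longrightarrow>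
      b \<in> Hom B M M' \<longrightarrow> c \<in> Hom B C C' \<longrightarrow> Cmp B y' b = Cmp B c y \<longrightarrow>
      (\<exists>a\<in>Hom B A A'. Cmp B x' a = Cmp B b x \<and> Push B a d = Pull B c d'))"

definition ET4 :: "('o,'m,'e) extri \<Rightarrow> bool" where
"ET4 B \<longleftrightarrow>
  (\<forall>d d' A Bo C D F f f' g g'.
      realizes B d A Bo D f f' \<longrightarrow> realizes B d' Bo C F g g' \<longrightarrow>
      (\<exists>Eo h h' dm e d''. dm \<in> Hom B D Eo \<and> e \<in> Hom B Eo F \<and>
          realizes B d'' A C Eo h h' \<and>
          h = Cmp B g f \<and> Cmp B h' g = Cmp B dm f' \<and> Cmp B e h' = g' \<and>
          realizes B (Push B f' d') D Eo F dm e \<and>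
          Pull B dm d'' = d \<and>
          Push B f d'' = Pull B e d'))"

definition ET4op :: "('o,'m,'e) extri \<Rightarrow> bool" where
"ET4op B \<longleftrightarrow>
  (\<forall>d d' D A Bo C F f' f g' g.
      realizes B d D A Bo f' f \<longrightarrow> realizes B d' F Bo C g' g \<longrightarrow>
      (\<exists>Eo dm e h h' d''. dm \<in> Hom B D Eo \<and> e \<in> Hom B Eo F \<and>
          realizes B d'' Eo A C h' h \<and>
          realizes B (Pull B g' d) D Eo F dm e \<and>
          Cmp B h' dm = f' \<and> Cmp B f h' = Cmp B g' e \<and> h = Cmp B g f \<and>
          Push B e d'' = d' \<and>
          Push B dm d = Pull B g d''))"

definition extriangulated :: "('o,'m,'e) extri \<Rightarrow> bool" where
"extriangulated B \<longleftrightarrow> additive B \<and> ET1 B \<and> ET2 B \<and> ET3 B \<and> ET3op B \<and> ET4 B \<and> ET4op B"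

definition conflation :: "('o,'m,'e) extri \<Rightarrow> 'o \<Rightarrow> 'o \<Rightarrow> 'o \<Rightarrow> 'm \<Rightarrow> 'm \<Rightarrow> bool" where
"conflation B A M C x y \<longleftrightarrow> (\<exists>d. realizes B d A M C x y)"

definition projective :: "('o,'m,'e) extri \<Rightarrow> 'o \<Rightarrow> bool" where
"projective B P \<longleftrightarrow>
  (\<forall>A M C x y c. conflation B A M C x y \<longrightarrow> c \<in> Hom B P C \<longrightarrow>
      (\<exists>b\<in>Hom B P M. Cmp B y b = c))"

definition injective :: "('o,'m,'e) extri \<Rightarrow> 'o \<Rightarrow> bool" where
"injective B I \<longleftrightarrow>
  (\<forall>A M C x y a. conflation B A M C x y \<longrightarrow> a \<in> Hom B A I \<longrightarrow>
      (\<exists>b\<in>Hom B M I. Cmp B b x = a))"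

definition enough_projectives :: "('o,'m,'e) extri \<Rightarrow> bool" where
"enough_projectives B \<longleftrightarrow> (\<forall>C. \<exists>A P x y. projective B P \<and> conflation B A P C x y)"

definition enough_injectives :: "('o,'m,'e) extri \<Rightarrow> bool" where
"enough_injectives B \<longleftrightarrow> (\<forall>A. \<exists>I C x y. injective B I \<and> conflation B A I C x y)"

text \<open>A (full, additive) subcategory, given by its class of objects, closed under
  isomorphisms and finite direct sums (including the empty sum, a zero object).\<close>
definition subcategory :: "('o,'m,'e) extri \<Rightarrow> 'o set \<Rightarrow> bool" where
"subcategory B S \<longleftrightarrow>
  (\<forall>X Y f. X \<in> S \<longrightarrow> is_iso B X Y f \<longrightarrow> Y \<in> S) \<and>
  (\<exists>Z\<in>S. zero_obj B Z) \<and>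
  (\<forall>A1 A2 T i1 i2 p1 p2. biproduct B A1 A2 T i1 i2 p1 p2 \<longrightarrow> A1 \<in> S \<longrightarrow> A2 \<in> S \<longrightarrow> T \<in> S)"

definition perp1 :: "('o,'m,'e) extri \<Rightarrow> 'o set \<Rightarrow> 'o set" where
"perp1 B S = {M. \<forall>X\<in>S. Ext B X M = {Zeroe B X M}}"

definition rigid :: "('o,'m,'e) extri \<Rightarrow> 'o set \<Rightarrow> bool" where
"rigid B S \<longleftrightarrow> (\<forall>X\<in>S. \<forall>Y\<in>S. Ext B X Y = {Zeroe B X Y})"

definition contravariantly_finite :: "('o,'m,'e) extri \<Rightarrow> 'o set \<Rightarrow> bool" where
"contravariantly_finite B S \<longleftrightarrow>
  (\<forall>M. \<exists>X\<in>S. \<exists>f\<in>Hom B X M. \<forall>X'\<in>S. \<forall>g\<in>Hom B X' M. \<exists>h\<in>Hom B X' X. Cmp B f h = g)"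

definition summand_closed :: "('o,'m,'e) extri \<Rightarrow> 'o set \<Rightarrow> bool" where
"summand_closed B S \<longleftrightarrow>
  (\<forall>A1 A2 T i1 i2 p1 p2. biproduct B A1 A2 T i1 i2 p1 p2 \<longrightarrow> T \<in> S \<longrightarrow> A1 \<in> S \<and> A2 \<in> S)"

definition RCP :: "('o,'m,'e) extri \<Rightarrow> 'o set \<Rightarrow> bool" where
"RCP B S \<longleftrightarrow> subcategory B S \<and> {P. projective B P} \<subseteq> S \<and> rigid B S \<and>
   contravariantly_finite B S \<and> summand_closed B S"

definition heart_objs :: "('o,'m,'e) extri \<Rightarrow> 'o set \<Rightarrow> 'o set \<Rightarrow> 'o set" where
"heart_objs B U V = {M.
   (\<exists>VM UM x y. conflation B VM UM M x y \<and> VM \<in> V \<and> UM \<in> U \<inter> V) \<and>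
   (\<exists>VM UM x y. conflation B M VM UM x y \<and> VM \<in> U \<inter> V \<and> UM \<in> U)}"

definition factors_through :: "('o,'m,'e) extri \<Rightarrow> 'o set \<Rightarrow> 'o \<Rightarrow> 'o \<Rightarrow> 'm \<Rightarrow> bool" where
"factors_through B S X Y f \<longleftrightarrow>
  (\<exists>W\<in>S. \<exists>g\<in>Hom B X W. \<exists>h\<in>Hom B W Y. f = Cmp B h g)"

text \<open>f in Hom Y X induces an epimorphism in the ideal quotient Hh/S:
  for g,h : X -> Z with Z in Hh, if g f and h f agree modulo morphisms factoring
  through S, then so do g and h.\<close>
definition quotient_epi :: "('o,'m,'e) extri \<Rightarrow> 'o set \<Rightarrow> 'o set \<Rightarrow> 'o \<Rightarrow> 'o \<Rightarrow> 'm \<Rightarrow> bool" where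
"quotient_epi B Hh S Y X f \<longleftrightarrow>
  (\<forall>Z\<in>Hh. \<forall>g\<in>Hom B X Z. \<forall>h\<in>Hom B X Z.
     factors_through B S Y Z (Addm B (Cmp B g f) (Negm B (Cmp B h f))) \<longrightarrow>
     factors_through B S X Z (Addm B g (Negm B h)))"

end

theory Submission
  imports Defs
begin


lemma grp_lemmas:
  fixes G :: "'a set" and add :: "'a \<Rightarrow> 'a \<Rightarrow> 'a" and z :: 'a and neg :: "'a \<Rightarrow> 'a"
  assumes z: "z \<in> G" and cl: "\<forall>a\<in>G. \<forall>b\<in>G. add a b \<in> G" and ncl: "\<forall>a\<in>G. neg a \<in> G"
   and as: "\<forall>a\<in>G. \<forall>b\<in>G. \<forall>c\<in>G. add (add a b) c = add a (add b c)"
   and cm: "\<forall>a\<in>G. \<forall>b\<in>G. add a b = add b a"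
   and zl: "\<forall>a\<in>G. add z a = a" and nl: "\<forall>a\<in>G. add (neg a) a = z"
  shows "\<And>a. a \<in> G \<Longrightarrow> add a a = a \<Longrightarrow> a = z"
    and "\<And>a b. a \<in> G \<Longrightarrow> b \<in> G \<Longrightarrow> add a b = z \<Longrightarrow> a = neg b"
    and "\<And>a. a \<in> G \<Longrightarrow> add a z = a"
    and "neg z = z"
    and "\<And>a. a \<in> G \<Longrightarrow> neg (neg a) = a"
    and "\<And>a. a \<in> G \<Longrightarrow> add a (neg a) = z"
proof -
  show 1: "\<And>a. a \<in> G \<Longrightarrow> add a a = a \<Longrightarrow> a = z"
  proof -
    fix a assume a: "a \<in> G" "add a a = a"
    have "add (neg a) (add a a) = add (neg a) a" using a by simp
    then show "a = z" using as a ncl nl zl by (metis)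
  qed
  show 2: "\<And>a b. a \<in> G \<Longrightarrow> b \<in> G \<Longrightarrow> add a b = z \<Longrightarrow> a = neg b"
  proof -
    fix a b assume ab: "a \<in> G" "b \<in> G" "add a b = z"
    have "add (add a b) (neg b) = add a (add b (neg b))" using as ab ncl by blast
    moreover have "add b (neg b) = z" using cm nl ab ncl by metis
    ultimately show "a = neg b" using ab zl cm ncl z by metis
  qed
  show 3: "\<And>a. a \<in> G \<Longrightarrow> add a z = a" using cm zl z by metis
  show "neg z = z" using 3 nl z ncl by metis
  show "\<And>a. a \<in> G \<Longrightarrow> neg (neg a) = a"
  proof -
    fix a assume a: "a \<in> G"
    have "add a (neg a) = z" using cm nl a ncl by metis
    then show "neg (neg a) = a" using 2 a ncl by metis
  qed
  show "\<And>a. a \<in> G \<Longrightarrow> add a (neg a) = z" using cm nl ncl by metis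
qed

locale ec =
  fixes B :: "('o,'m,'e) extri"
  assumes ext: "extriangulated B"
begin

lemma add: "additive B" using ext by (simp add: extriangulated_def)
lemma cat: "category B" using add by (simp add: additive_def)
lemma pre: "preadditive B" using add by (simp add: additive_def)
lemma et1: "ET1 B" using ext by (simp add: extriangulated_def)
lemma et2: "ET2 B" using ext by (simp add: extriangulated_def)
lemma et3: "ET3 B" using ext by (simp add: extriangulated_def)
lemma et3op: "ET3op B" using ext by (simp add: extriangulated_def)
lemma et4op: "ET4op B" using ext by (simp add: extriangulated_def)

lemma idm[simp]: "Idm B X \<in> Hom B X X" using cat by (simp add: category_def)
lemma cmp: "f \<in> Hom B X Y \<Longrightarrow> g \<in> Hom B Y Z \<Longrightarrow> Cmp B g f \<in> Hom B X Z"
  using cat unfolding category_def by blast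
lemma idl: "f \<in> Hom B X Y \<Longrightarrow> Cmp B (Idm B Y) f = f"
  using cat unfolding category_def by blast
lemma idr: "f \<in> Hom B X Y \<Longrightarrow> Cmp B f (Idm B X) = f"
  using cat unfolding category_def by blast
lemma assoc: "f \<in> Hom B W X \<Longrightarrow> g \<in> Hom B X Y \<Longrightarrow> h \<in> Hom B Y Z \<Longrightarrow>
      Cmp B h (Cmp B g f) = Cmp B (Cmp B h g) f"
  using cat unfolding category_def by blast
lemma homu: "f \<in> Hom B X Y \<Longrightarrow> f \<in> Hom B X' Y' \<Longrightarrow> X = X' \<and> Y = Y'"
  using cat unfolding category_def by blast

lemma pre1: "Zerom B X Y \<in> Hom B X Y \<and>
     (\<forall>f\<in>Hom B X Y. \<forall>g\<in>Hom B X Y. Addm B f g \<in> Hom B X Y) \<and>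
     (\<forall>f\<in>Hom B X Y. Negm B f \<in> Hom B X Y) \<and>
     (\<forall>f\<in>Hom B X Y. \<forall>g\<in>Hom B X Y. \<forall>h\<in>Hom B X Y.
         Addm B (Addm B f g) h = Addm B f (Addm B g h)) \<and>
     (\<forall>f\<in>Hom B X Y. \<forall>g\<in>Hom B X Y. Addm B f g = Addm B g f) \<and>
     (\<forall>f\<in>Hom B X Y. Addm B (Zerom B X Y) f = f) \<and>
     (\<forall>f\<in>Hom B X Y. Addm B (Negm B f) f = Zerom B X Y)"
  by (rule pre[unfolded preadditive_def, THEN conjunct1, THEN spec, THEN spec])
lemma pre2: "\<forall>X Y Z f f' g. f \<in> Hom B X Y \<longrightarrow> f' \<in> Hom B X Y \<longrightarrow> g \<in> Hom B Y Z \<longrightarrow>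
      Cmp B g (Addm B f f') = Addm B (Cmp B g f) (Cmp B g f')"
  by (rule pre[unfolded preadditive_def, THEN conjunct2, THEN conjunct1])
lemma pre3: "\<forall>X Y Z f g g'. f \<in> Hom B X Y \<longrightarrow> g \<in> Hom B Y Z \<longrightarrow> g' \<in> Hom B Y Z \<longrightarrow>
      Cmp B (Addm B g g') f = Addm B (Cmp B g f) (Cmp B g' f)"
  by (rule pre[unfolded preadditive_def, THEN conjunct2, THEN conjunct2])

lemma zhom[simp]: "Zerom B X Y \<in> Hom B X Y" using pre1 by blast
lemma addh: "f \<in> Hom B X Y \<Longrightarrow> g \<in> Hom B X Y \<Longrightarrow> Addm B f g \<in> Hom B X Y"
  using pre1[of X Y] pre2 pre3 by blast
lemma negh: "f \<in> Hom B X Y \<Longrightarrow> Negm B f \<in> Hom B X Y"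
  using pre1[of X Y] pre2 pre3 by blast
lemma distl: "f \<in> Hom B X Y \<Longrightarrow> f' \<in> Hom B X Y \<Longrightarrow> g \<in> Hom B Y Z \<Longrightarrow>
      Cmp B g (Addm B f f') = Addm B (Cmp B g f) (Cmp B g f')"
  using pre2 by blast
lemma distr: "f \<in> Hom B X Y \<Longrightarrow> g \<in> Hom B Y Z \<Longrightarrow> g' \<in> Hom B Y Z \<Longrightarrow>
      Cmp B (Addm B g g') f = Addm B (Cmp B g f) (Cmp B g' f)"
  using pre3 by blast

lemma add0l: "a \<in> Hom B X Y \<Longrightarrow> Addm B (Zerom B X Y) a = a"
  using pre1[of X Y] pre2 pre3 by blast
lemma addnegl: "a \<in> Hom B X Y \<Longrightarrow> Addm B (Negm B a) a = Zerom B X Y"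
  using pre1[of X Y] pre2 pre3 by blast
lemma addassoc: "a \<in> Hom B X Y \<Longrightarrow> b \<in> Hom B X Y \<Longrightarrow> c \<in> Hom B X Y \<Longrightarrow>
   Addm B (Addm B a b) c = Addm B a (Addm B b c)"
  using pre1[of X Y] pre2 pre3 by blast
lemma addcomm: "a \<in> Hom B X Y \<Longrightarrow> b \<in> Hom B X Y \<Longrightarrow> Addm B a b = Addm B b a"
  using pre1[of X Y] pre2 pre3 by blast

lemma hgrp: "\<And>a. a \<in> Hom B X Y \<Longrightarrow> Addm B a a = a \<Longrightarrow> a = Zerom B X Y"
    and hinv: "\<And>a b. a \<in> Hom B X Y \<Longrightarrow> b \<in> Hom B X Y \<Longrightarrow> Addm B a b = Zerom B X Y \<Longrightarrow> a = Negm B b"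
    and add0r: "\<And>a. a \<in> Hom B X Y \<Longrightarrow> Addm B a (Zerom B X Y) = a"
    and neg0: "Negm B (Zerom B X Y) = Zerom B X Y"
    and negneg: "\<And>a. a \<in> Hom B X Y \<Longrightarrow> Negm B (Negm B a) = a"
    and addneg: "\<And>a. a \<in> Hom B X Y \<Longrightarrow> Addm B a (Negm B a) = Zerom B X Y"
proof -
  note g = grp_lemmas[of "Zerom B X Y" "Hom B X Y" "Addm B" "Negm B", OF zhom]
  have h1: "\<forall>a\<in>Hom B X Y. \<forall>b\<in>Hom B X Y. Addm B a b \<in> Hom B X Y" using addh by blast
  have h2: "\<forall>a\<in>Hom B X Y. Negm B a \<in> Hom B X Y" using negh by blast
  have h3: "\<forall>a\<in>Hom B X Y. \<forall>b\<in>Hom B X Y. \<forall>c\<in>Hom B X Y. Addm B (Addm B a b) c = Addm B a (Addm B b c)" using addassoc by blast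
  have h4: "\<forall>a\<in>Hom B X Y. \<forall>b\<in>Hom B X Y. Addm B a b = Addm B b a" using addcomm by blast
  have h5: "\<forall>a\<in>Hom B X Y. Addm B (Zerom B X Y) a = a" using add0l by blast
  have h6: "\<forall>a\<in>Hom B X Y. Addm B (Negm B a) a = Zerom B X Y" using addnegl by blast
  note gg = g[OF h1 h2 h3 h4 h5 h6]
  show "\<And>a. a \<in> Hom B X Y \<Longrightarrow> Addm B a a = a \<Longrightarrow> a = Zerom B X Y" by (rule gg(1))
  show "\<And>a b. a \<in> Hom B X Y \<Longrightarrow> b \<in> Hom B X Y \<Longrightarrow> Addm B a b = Zerom B X Y \<Longrightarrow> a = Negm B b" by (rule gg(2))
  show "\<And>a. a \<in> Hom B X Y \<Longrightarrow> Addm B a (Zerom B X Y) = a" by (rule gg(3))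
  show "Negm B (Zerom B X Y) = Zerom B X Y" by (rule gg(4))
  show "\<And>a. a \<in> Hom B X Y \<Longrightarrow> Negm B (Negm B a) = a" by (rule gg(5))
  show "\<And>a. a \<in> Hom B X Y \<Longrightarrow> Addm B a (Negm B a) = Zerom B X Y" by (rule gg(6))
qed

lemma cmpz1: "g \<in> Hom B Y Z \<Longrightarrow> Cmp B g (Zerom B X Y) = Zerom B X Z"
proof -
  assume g: "g \<in> Hom B Y Z"
  have "Cmp B g (Zerom B X Y) = Cmp B g (Addm B (Zerom B X Y) (Zerom B X Y))"
    using add0l[of "Zerom B X Y"] by simp
  also have "\<dots> = Addm B (Cmp B g (Zerom B X Y)) (Cmp B g (Zerom B X Y))"
    using distl[OF zhom zhom g] by simp
  finally show ?thesis using hgrp cmp g zhom by metis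
qed

lemma cmpz2: "f \<in> Hom B X Y \<Longrightarrow> Cmp B (Zerom B Y Z) f = Zerom B X Z"
proof -
  assume f: "f \<in> Hom B X Y"
  have "Cmp B (Zerom B Y Z) f = Cmp B (Addm B (Zerom B Y Z) (Zerom B Y Z)) f"
    using add0l[of "Zerom B Y Z"] by simp
  also have "\<dots> = Addm B (Cmp B (Zerom B Y Z) f) (Cmp B (Zerom B Y Z) f)"
    using distr[OF f zhom zhom] by simp
  finally show ?thesis using hgrp cmp f zhom by metis
qed

lemmas e0 = et1[unfolded ET1_def, THEN conjunct1]
lemmas e1 = et1[unfolded ET1_def, THEN conjunct2, THEN conjunct1]
lemmas e2 = et1[unfolded ET1_def, THEN conjunct2, THEN conjunct2, THEN conjunct1]
lemmas e3 = et1[unfolded ET1_def, THEN conjunct2, THEN conjunct2, THEN conjunct2, THEN conjunct1]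
lemmas e4 = et1[unfolded ET1_def, THEN conjunct2, THEN conjunct2, THEN conjunct2, THEN conjunct2, THEN conjunct1]
lemmas e5 = et1[unfolded ET1_def, THEN conjunct2, THEN conjunct2, THEN conjunct2, THEN conjunct2, THEN conjunct2, THEN conjunct1]
lemmas e6 = et1[unfolded ET1_def, THEN conjunct2, THEN conjunct2, THEN conjunct2, THEN conjunct2, THEN conjunct2, THEN conjunct2, THEN conjunct1]
lemmas e7 = et1[unfolded ET1_def, THEN conjunct2, THEN conjunct2, THEN conjunct2, THEN conjunct2, THEN conjunct2, THEN conjunct2, THEN conjunct2, THEN conjunct1]
lemmas e8 = et1[unfolded ET1_def, THEN conjunct2, THEN conjunct2, THEN conjunct2, THEN conjunct2, THEN conjunct2, THEN conjunct2, THEN conjunct2, THEN conjunct2, THEN conjunct1]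
lemmas e9 = et1[unfolded ET1_def, THEN conjunct2, THEN conjunct2, THEN conjunct2, THEN conjunct2, THEN conjunct2, THEN conjunct2, THEN conjunct2, THEN conjunct2, THEN conjunct2, THEN conjunct1]
lemmas e10 = et1[unfolded ET1_def, THEN conjunct2, THEN conjunct2, THEN conjunct2, THEN conjunct2, THEN conjunct2, THEN conjunct2, THEN conjunct2, THEN conjunct2, THEN conjunct2, THEN conjunct2, THEN conjunct1]
lemmas e11 = et1[unfolded ET1_def, THEN conjunct2, THEN conjunct2, THEN conjunct2, THEN conjunct2, THEN conjunct2, THEN conjunct2, THEN conjunct2, THEN conjunct2, THEN conjunct2, THEN conjunct2, THEN conjunct2]

lemma ze[simp]: "Zeroe B C A \<in> Ext B C A"
  using e0[THEN spec[of _ C], THEN spec[of _ A]] by blast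
lemma adde: "d \<in> Ext B C A \<Longrightarrow> e \<in> Ext B C A \<Longrightarrow> Adde B d e \<in> Ext B C A"
  using e0[THEN spec[of _ C], THEN spec[of _ A]] by blast
lemma extu: "d \<in> Ext B C A \<Longrightarrow> d \<in> Ext B C' A' \<Longrightarrow> C = C' \<and> A = A'"
  using e1 by blast
lemma pushe: "a \<in> Hom B A A' \<Longrightarrow> d \<in> Ext B C A \<Longrightarrow> Push B a d \<in> Ext B C A'"
  using e2 by blast
lemma pulle: "c \<in> Hom B C' C \<Longrightarrow> d \<in> Ext B C A \<Longrightarrow> Pull B c d \<in> Ext B C' A"
  using e3 by blast
lemma pushid: "d \<in> Ext B C A \<Longrightarrow> Push B (Idm B A) d = d"
  using e4 by blast
lemma pullid: "d \<in> Ext B C A \<Longrightarrow> Pull B (Idm B C) d = d"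
  using e4 by blast
lemma pushc: "a \<in> Hom B A A' \<Longrightarrow> a' \<in> Hom B A' A'' \<Longrightarrow> d \<in> Ext B C A \<Longrightarrow>
      Push B (Cmp B a' a) d = Push B a' (Push B a d)"
  using e5 by blast
lemma pullc: "c \<in> Hom B C' C \<Longrightarrow> c' \<in> Hom B C'' C' \<Longrightarrow> d \<in> Ext B C A \<Longrightarrow>
      Pull B (Cmp B c c') d = Pull B c' (Pull B c d)"
  using e6 by blast
lemma pushpull: "a \<in> Hom B A A' \<Longrightarrow> c \<in> Hom B C' C \<Longrightarrow> d \<in> Ext B C A \<Longrightarrow>
      Push B a (Pull B c d) = Pull B c (Push B a d)"
  using e7 by blast
lemma pushadd: "a \<in> Hom B A A' \<Longrightarrow> d \<in> Ext B C A \<Longrightarrow> e \<in> Ext B C A \<Longrightarrow>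
      Push B a (Adde B d e) = Adde B (Push B a d) (Push B a e)"
  using e8 by blast
lemma pulladd: "c \<in> Hom B C' C \<Longrightarrow> d \<in> Ext B C A \<Longrightarrow> e \<in> Ext B C A \<Longrightarrow>
      Pull B c (Adde B d e) = Adde B (Pull B c d) (Pull B c e)"
  using e9 by blast

lemma nege: "d \<in> Ext B C A \<Longrightarrow> Nege B d \<in> Ext B C A"
  using e0[THEN spec[of _ C], THEN spec[of _ A]] by blast
lemma eassoc: "a \<in> Ext B C A \<Longrightarrow> b \<in> Ext B C A \<Longrightarrow> c \<in> Ext B C A \<Longrightarrow>
   Adde B (Adde B a b) c = Adde B a (Adde B b c)"
  using e0[THEN spec[of _ C], THEN spec[of _ A]] by blast
lemma ecomm: "a \<in> Ext B C A \<Longrightarrow> b \<in> Ext B C A \<Longrightarrow> Adde B a b = Adde B b a"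
  using e0[THEN spec[of _ C], THEN spec[of _ A]] by blast
lemma eadd0l: "a \<in> Ext B C A \<Longrightarrow> Adde B (Zeroe B C A) a = a"
  using e0[THEN spec[of _ C], THEN spec[of _ A]] by blast
lemma enegl: "a \<in> Ext B C A \<Longrightarrow> Adde B (Nege B a) a = Zeroe B C A"
  using e0[THEN spec[of _ C], THEN spec[of _ A]] by blast

lemma egrp: "\<And>a. a \<in> Ext B C A \<Longrightarrow> Adde B a a = a \<Longrightarrow> a = Zeroe B C A"
    and eadd0r: "\<And>a. a \<in> Ext B C A \<Longrightarrow> Adde B a (Zeroe B C A) = a"
proof -
  note g = grp_lemmas[of "Zeroe B C A" "Ext B C A" "Adde B" "Nege B", OF ze]
  have h1: "\<forall>a\<in>Ext B C A. \<forall>b\<in>Ext B C A. Adde B a b \<in> Ext B C A" using adde by blast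
  have h2: "\<forall>a\<in>Ext B C A. Nege B a \<in> Ext B C A" using nege by blast
  have h3: "\<forall>a\<in>Ext B C A. \<forall>b\<in>Ext B C A. \<forall>c\<in>Ext B C A. Adde B (Adde B a b) c = Adde B a (Adde B b c)" using eassoc by blast
  have h4: "\<forall>a\<in>Ext B C A. \<forall>b\<in>Ext B C A. Adde B a b = Adde B b a" using ecomm by blast
  have h5: "\<forall>a\<in>Ext B C A. Adde B (Zeroe B C A) a = a" using eadd0l by blast
  have h6: "\<forall>a\<in>Ext B C A. Adde B (Nege B a) a = Zeroe B C A" using enegl by blast
  note gg = g[OF h1 h2 h3 h4 h5 h6]
  show "\<And>a. a \<in> Ext B C A \<Longrightarrow> Adde B a a = a \<Longrightarrow> a = Zeroe B C A" by (rule gg(1))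
  show "\<And>a. a \<in> Ext B C A \<Longrightarrow> Adde B a (Zeroe B C A) = a" by (rule gg(3))
qed

lemma push0: "a \<in> Hom B A A' \<Longrightarrow> Push B a (Zeroe B C A) = Zeroe B C A'"
proof -
  assume a: "a \<in> Hom B A A'"
  have "Push B a (Zeroe B C A) = Push B a (Adde B (Zeroe B C A) (Zeroe B C A))"
    using eadd0l[of "Zeroe B C A"] by simp
  also have "\<dots> = Adde B (Push B a (Zeroe B C A)) (Push B a (Zeroe B C A))"
    using pushadd[OF a ze ze] by simp
  finally show ?thesis using egrp pushe a ze by metis
qed

lemma pull0: "c \<in> Hom B C' C \<Longrightarrow> Pull B c (Zeroe B C A) = Zeroe B C' A"
proof -
  assume a: "c \<in> Hom B C' C"
  have "Pull B c (Zeroe B C A) = Pull B c (Adde B (Zeroe B C A) (Zeroe B C A))"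
    using eadd0l[of "Zeroe B C A"] by simp
  also have "\<dots> = Adde B (Pull B c (Zeroe B C A)) (Pull B c (Zeroe B C A))"
    using pulladd[OF a ze ze] by simp
  finally show ?thesis using egrp pulle a ze by metis
qed

end

context ec begin

lemmas t0 = et2[unfolded ET2_def, THEN conjunct1]
lemmas t1 = et2[unfolded ET2_def, THEN conjunct2, THEN conjunct1]
lemmas t2 = et2[unfolded ET2_def, THEN conjunct2, THEN conjunct2, THEN conjunct1]
lemmas t3 = et2[unfolded ET2_def, THEN conjunct2, THEN conjunct2, THEN conjunct2, THEN conjunct1]
lemmas t4 = et2[unfolded ET2_def, THEN conjunct2, THEN conjunct2, THEN conjunct2, THEN conjunct2, THEN conjunct1]
lemmas t5 = et2[unfolded ET2_def, THEN conjunct2, THEN conjunct2, THEN conjunct2, THEN conjunct2, THEN conjunct2, THEN conjunct1]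
lemmas t6 = et2[unfolded ET2_def, THEN conjunct2, THEN conjunct2, THEN conjunct2, THEN conjunct2, THEN conjunct2, THEN conjunct2]

lemma real_ex: "d \<in> Ext B C A \<Longrightarrow> \<exists>M x y. realizes B d A M C x y"
  using t1 by blast
lemma real_equiv: "realizes B d A M C x y \<Longrightarrow> x' \<in> Hom B A M' \<Longrightarrow> y' \<in> Hom B M' C \<Longrightarrow>
      seq_equiv B M M' C x y x' y' \<Longrightarrow> realizes B d A M' C x' y'"
proof -
  assume a: "realizes B d A M C x y" "x' \<in> Hom B A M'" "y' \<in> Hom B M' C" "seq_equiv B M M' C x y x' y'"
  have "Real B d x' y'" using t3 a by blast
  then show ?thesis using a unfolding realizes_def by blast
qed
lemma real_prop: "realizes B d A M C x y \<Longrightarrow> realizes B d' A' M' C' x' y' \<Longrightarrow>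
      a \<in> Hom B A A' \<Longrightarrow> c \<in> Hom B C C' \<Longrightarrow> Push B a d = Pull B c d' \<Longrightarrow>
      (\<exists>b\<in>Hom B M M'. Cmp B b x = Cmp B x' a \<and> Cmp B y' b = Cmp B c y)"
  using t4 by blast

lemma bip: "biproduct B A1 A2 S i1 i2 p1 p2 \<Longrightarrow> i1 \<in> Hom B A1 S \<and> i2 \<in> Hom B A2 S \<and> p1 \<in> Hom B S A1 \<and> p2 \<in> Hom B S A2 \<and>
  Cmp B p1 i1 = Idm B A1 \<and> Cmp B p2 i2 = Idm B A2 \<and>
  Cmp B p2 i1 = Zerom B A1 A2 \<and> Cmp B p1 i2 = Zerom B A2 A1 \<and>
  Addm B (Cmp B i1 p1) (Cmp B i2 p2) = Idm B S"
  by (simp add: biproduct_def)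

lemma split_real: "biproduct B A C S i1 i2 p1 p2 \<Longrightarrow> realizes B (Zeroe B C A) A S C i1 p2"
proof -
  assume b: "biproduct B A C S i1 i2 p1 p2"
  have "Real B (Zeroe B C A) i1 p2" using t5 b by blast
  then show ?thesis using b unfolding realizes_def biproduct_def by simp
qed

lemma et3_rule: "realizes B d A M C x y \<Longrightarrow> realizes B d' A' M' C' x' y' \<Longrightarrow>
      a \<in> Hom B A A' \<Longrightarrow> b \<in> Hom B M M' \<Longrightarrow> Cmp B b x = Cmp B x' a \<Longrightarrow>
      (\<exists>c\<in>Hom B C C'. Cmp B c y = Cmp B y' b \<and> Push B a d = Pull B c d')"
  using et3 unfolding ET3_def by blast

lemma et3op_rule: "realizes B d A M C x y \<Longrightarrow> realizes B d' A' M' C' x' y' \<Longrightarrow>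
      b \<in> Hom B M M' \<Longrightarrow> c \<in> Hom B C C' \<Longrightarrow> Cmp B y' b = Cmp B c y \<Longrightarrow>
      (\<exists>a\<in>Hom B A A'. Cmp B x' a = Cmp B b x \<and> Push B a d = Pull B c d')"
  using et3op unfolding ET3op_def by blast

lemma et4op_rule: "realizes B d D A Bo f' f \<Longrightarrow> realizes B d' F Bo C g' g \<Longrightarrow>
      (\<exists>Eo dm e h h' d''. dm \<in> Hom B D Eo \<and> e \<in> Hom B Eo F \<and>
          realizes B d'' Eo A C h' h \<and>
          realizes B (Pull B g' d) D Eo F dm e \<and>
          Cmp B h' dm = f' \<and> Cmp B f h' = Cmp B g' e \<and> h = Cmp B g f \<and>
          Push B e d'' = d' \<and>
          Push B dm d = Pull B g d'')"
  using et4op unfolding ET4op_def by blast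

lemma realD: "realizes B d A M C x y \<Longrightarrow> d \<in> Ext B C A \<and> x \<in> Hom B A M \<and> y \<in> Hom B M C"
  by (simp add: realizes_def)

lemma bip_ex: "\<exists>S i1 i2 p1 p2. biproduct B A1 A2 S i1 i2 p1 p2"
  using add unfolding additive_def by blast

lemma zero_ex: "\<exists>Z. zero_obj B Z"
  using add unfolding additive_def by blast

lemma exact_ext:
  assumes th: "realizes B \<theta> A M C x y" and dl: "\<delta> \<in> Ext B D A" and z: "Push B x \<delta> = Zeroe B D M"
  shows "\<exists>c\<in>Hom B D C. \<delta> = Pull B c \<theta>"
proof -
  obtain N a b where rd: "realizes B \<delta> A N D a b" using real_ex[OF dl] by blast
  obtain S i1 i2 p1 p2 where bS: "biproduct B M D S i1 i2 p1 p2" using bip_ex by blast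
  note bb = bip[OF bS]
  have rs: "realizes B (Zeroe B D M) M S D i1 p2" by (rule split_real[OF bS])
  have x: "x \<in> Hom B A M" using realD[OF th] by blast
  have "Push B x \<delta> = Pull B (Idm B D) (Zeroe B D M)" using z pullid[OF ze] by simp
  then obtain n' where n': "n' \<in> Hom B N S" "Cmp B n' a = Cmp B i1 x"
    using real_prop[OF rd rs x idm] by blast
  have a: "a \<in> Hom B A N" using realD[OF rd] by blast
  define n where "n = Cmp B p1 n'"
  have nh: "n \<in> Hom B N M" using n_def cmp n'(1) bb by blast
  have p1: "p1 \<in> Hom B S M" and i1: "i1 \<in> Hom B M S" using bb by blast+
  have "Cmp B n a = Cmp B p1 (Cmp B n' a)" using n_def assoc[OF a n'(1) p1] by simp
  also have "\<dots> = Cmp B (Cmp B p1 i1) x" using n'(2) assoc[OF x i1 p1] by simp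
  also have "\<dots> = x" using bb idl[OF x] by simp
  finally have "Cmp B n a = Cmp B x (Idm B A)" using idr[OF x] by simp
  then obtain c where "c \<in> Hom B D C" "Push B (Idm B A) \<delta> = Pull B c \<theta>"
    using et3_rule[OF rd th idm nh] by blast
  then show ?thesis using pushid[OF dl] by auto
qed

lemma extend_infl:
  assumes th: "realizes B \<epsilon> A M K x y" and a: "a \<in> Hom B A V" and z: "Push B a \<epsilon> = Zeroe B K V"
  shows "\<exists>m\<in>Hom B M V. Cmp B m x = a"
proof -
  obtain S i1 i2 p1 p2 where bS: "biproduct B V K S i1 i2 p1 p2" using bip_ex by blast
  note bb = bip[OF bS]
  have rs: "realizes B (Zeroe B K V) V S K i1 p2" by (rule split_real[OF bS])
  have x: "x \<in> Hom B A M" using realD[OF th] by blast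
  have "Push B a \<epsilon> = Pull B (Idm B K) (Zeroe B K V)" using z pullid[OF ze] by simp
  then obtain n' where n': "n' \<in> Hom B M S" "Cmp B n' x = Cmp B i1 a"
    using real_prop[OF th rs a idm] by blast
  define m where "m = Cmp B p1 n'"
  have mh: "m \<in> Hom B M V" using m_def cmp n'(1) bb by blast
  have p1: "p1 \<in> Hom B S V" and i1: "i1 \<in> Hom B V S" using bb by blast+
  have "Cmp B m x = Cmp B p1 (Cmp B n' x)" using m_def assoc[OF x n'(1) p1] by simp
  also have "\<dots> = Cmp B (Cmp B p1 i1) a" using n'(2) assoc[OF a i1 p1] by simp
  also have "\<dots> = a" using bb idl[OF a] by simp
  finally show ?thesis using mh by blast
qed

lemma pull_defl_zero:
  assumes th: "realizes B \<tau> V N Z h' h"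
  shows "Pull B h \<tau> = Zeroe B N V"
proof -
  obtain S i1 i2 p1 p2 where bS: "biproduct B V N S i1 i2 p1 p2" using bip_ex by blast
  note bb = bip[OF bS]
  have rs: "realizes B (Zeroe B N V) V S N i1 p2" by (rule split_real[OF bS])
  have h: "h \<in> Hom B N Z" using realD[OF th] by blast
  obtain a where "a \<in> Hom B V V" "Push B a (Zeroe B N V) = Pull B h \<tau>"
    using et3op_rule[OF rs th, of p2 h] bb h by blast
  then show ?thesis using push0 by metis
qed

lemma bip_sym: "biproduct B A1 A2 S i1 i2 p1 p2 \<Longrightarrow> biproduct B A2 A1 S i2 i1 p2 p1"
  unfolding biproduct_def using addcomm cmp by metis

lemma bip_zero: "zero_obj B Z \<Longrightarrow> biproduct B A Z A (Idm B A) (Zerom B Z A) (Idm B A) (Zerom B A Z)"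
  unfolding biproduct_def zero_obj_def
  using idl[OF idm] cmpz1[OF idm] cmpz2[OF idm] cmpz1[OF zhom] add0r[OF idm] idm zhom
  by metis

end

context ec begin

lemma tw_prod:
  assumes bS: "biproduct B A C S i1 i2 p1 p2" and s: "s \<in> Hom B A C" and s': "s' \<in> Hom B A C"
  shows "Cmp B (Addm B (Idm B S) (Cmp B i2 (Cmp B s p1))) (Addm B (Idm B S) (Cmp B i2 (Cmp B s' p1)))
       = Addm B (Idm B S) (Cmp B i2 (Cmp B (Addm B s s') p1))"
proof -
  note bb = bip[OF bS]
  have i1: "i1 \<in> Hom B A S" and i2: "i2 \<in> Hom B C S" and p1: "p1 \<in> Hom B S A" and p2: "p2 \<in> Hom B S C"
    and p1i2: "Cmp B p1 i2 = Zerom B C A" using bb by blast+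
  define E where "E = (\<lambda>s. Cmp B i2 (Cmp B s p1))"
  have Eh: "\<And>s. s \<in> Hom B A C \<Longrightarrow> E s \<in> Hom B S S" unfolding E_def using cmp[OF cmp[OF p1] i2] by blast
  have EE: "Cmp B (E s) (E s') = Zerom B S S"
  proof -
    have sp: "Cmp B s' p1 \<in> Hom B S C" using cmp s' p1 by blast
    have "Cmp B (E s) (E s') = Cmp B i2 (Cmp B (Cmp B s p1) (Cmp B i2 (Cmp B s' p1)))"
      unfolding E_def using assoc[OF cmp[OF sp i2] cmp[OF p1 s] i2] by simp
    also have "Cmp B (Cmp B s p1) (Cmp B i2 (Cmp B s' p1)) = Cmp B s (Cmp B p1 (Cmp B i2 (Cmp B s' p1)))"
      using assoc[OF cmp[OF sp i2] p1 s] by simp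
    also have "Cmp B p1 (Cmp B i2 (Cmp B s' p1)) = Zerom B S A"
      using assoc[OF sp i2 p1] p1i2 cmpz2[OF sp] by simp
    finally show ?thesis using cmpz1[OF s] cmpz1[OF i2] by simp
  qed
  have 1: "Addm B (Idm B S) (E s) \<in> Hom B S S" using addh[OF idm Eh[OF s]] .
  have "Cmp B (Addm B (Idm B S) (E s)) (Addm B (Idm B S) (E s'))
     = Addm B (Cmp B (Addm B (Idm B S) (E s)) (Idm B S)) (Cmp B (Addm B (Idm B S) (E s)) (E s'))"
    using distl[OF idm Eh[OF s'] 1] by simp
  also have "Cmp B (Addm B (Idm B S) (E s)) (Idm B S) = Addm B (Idm B S) (E s)" using idr[OF 1] by simp
  also have "Cmp B (Addm B (Idm B S) (E s)) (E s') = Addm B (Cmp B (Idm B S) (E s')) (Cmp B (E s) (E s'))"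
    using distr[OF Eh[OF s'] idm Eh[OF s]] by simp
  also have "\<dots> = E s'" using idl[OF Eh[OF s']] EE add0r[OF Eh[OF s']] by simp
  also have "Addm B (Addm B (Idm B S) (E s)) (E s') = Addm B (Idm B S) (Addm B (E s) (E s'))"
    using addassoc[OF idm Eh[OF s] Eh[OF s']] by simp
  also have "Addm B (E s) (E s') = E (Addm B s s')"
  proof -
    have "Addm B (E s) (E s') = Cmp B i2 (Addm B (Cmp B s p1) (Cmp B s' p1))"
      unfolding E_def using distl[OF cmp[OF p1 s] cmp[OF p1 s'] i2] by simp
    also have "Addm B (Cmp B s p1) (Cmp B s' p1) = Cmp B (Addm B s s') p1" using distr[OF p1 s s'] by simp
    finally show ?thesis unfolding E_def by simp
  qed
  finally show ?thesis unfolding E_def by simp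
qed

lemma tw_comp:
  assumes bS: "biproduct B A C S i1 i2 p1 p2" and s: "s \<in> Hom B A C"
  shows "Cmp B p2 (Cmp B (Addm B (Idm B S) (Cmp B i2 (Cmp B s p1))) i1) = s"
proof -
  note bb = bip[OF bS]
  have i1: "i1 \<in> Hom B A S" and i2: "i2 \<in> Hom B C S" and p1: "p1 \<in> Hom B S A" and p2: "p2 \<in> Hom B S C"
    and p1i1: "Cmp B p1 i1 = Idm B A" and p2i2: "Cmp B p2 i2 = Idm B C" and p2i1: "Cmp B p2 i1 = Zerom B A C"
    using bb by blast+
  have e: "Cmp B i2 (Cmp B s p1) \<in> Hom B S S" using cmp[OF cmp[OF p1 s] i2] .
  have "Cmp B (Addm B (Idm B S) (Cmp B i2 (Cmp B s p1))) i1 = Addm B i1 (Cmp B (Cmp B i2 (Cmp B s p1)) i1)"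
    using distr[OF i1 idm e] idl[OF i1] by simp
  also have "Cmp B (Cmp B i2 (Cmp B s p1)) i1 = Cmp B i2 s"
    using assoc[OF i1 cmp[OF p1 s] i2] assoc[OF i1 p1 s] p1i1 idr[OF s] by simp
  finally have "Cmp B p2 (Cmp B (Addm B (Idm B S) (Cmp B i2 (Cmp B s p1))) i1) = Cmp B p2 (Addm B i1 (Cmp B i2 s))"
    by simp
  also have "\<dots> = Addm B (Cmp B p2 i1) (Cmp B p2 (Cmp B i2 s))" using distl[OF i1 cmp[OF s i2] p2] by simp
  also have "\<dots> = s" using p2i1 assoc[OF s i2 p2] p2i2 idl[OF s] add0l[OF s] by simp
  finally show ?thesis .
qed

lemma tw_real:
  assumes bS: "biproduct B A C S i1 i2 p1 p2" and t: "t \<in> Hom B A C"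
  shows "realizes B (Zeroe B C A) A S C
     (Cmp B (Addm B (Idm B S) (Cmp B i2 (Cmp B t p1))) i1)
     (Cmp B p2 (Addm B (Idm B S) (Cmp B i2 (Cmp B (Negm B t) p1))))"
proof -
  note bb = bip[OF bS]
  have i1: "i1 \<in> Hom B A S" and i2: "i2 \<in> Hom B C S" and p1: "p1 \<in> Hom B S A" and p2: "p2 \<in> Hom B S C"
    using bb by blast+
  define \<phi> where "\<phi> = Addm B (Idm B S) (Cmp B i2 (Cmp B t p1))"
  define \<psi> where "\<psi> = Addm B (Idm B S) (Cmp B i2 (Cmp B (Negm B t) p1))"
  have nt: "Negm B t \<in> Hom B A C" using negh t by blast
  have ph: "\<phi> \<in> Hom B S S" unfolding \<phi>_def using addh[OF idm cmp[OF cmp[OF p1 t] i2]] .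
  have ps: "\<psi> \<in> Hom B S S" unfolding \<psi>_def using addh[OF idm cmp[OF cmp[OF p1 nt] i2]] .
  have zz: "Addm B (Idm B S) (Cmp B i2 (Cmp B (Zerom B A C) p1)) = Idm B S"
    using cmpz2[OF p1] cmpz1[OF i2] add0r[OF idm] by simp
  have 1: "Cmp B \<phi> \<psi> = Idm B S" unfolding \<phi>_def \<psi>_def
    using tw_prod[OF bS t nt] addneg[OF t] zz by simp
  have 2: "Cmp B \<psi> \<phi> = Idm B S" unfolding \<phi>_def \<psi>_def
    using tw_prod[OF bS nt t] addnegl[OF t] zz by simp
  have iso: "is_iso B S S \<phi>" unfolding is_iso_def using ph ps 1 2 by blast
  have "Cmp B (Cmp B p2 \<psi>) \<phi> = p2" using assoc[OF ph ps p2] 2 idr[OF p2] by simp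
  then have se: "seq_equiv B S S C i1 p2 (Cmp B \<phi> i1) (Cmp B p2 \<psi>)"
    unfolding seq_equiv_def using iso by blast
  show ?thesis using real_equiv[OF split_real[OF bS] cmp[OF i1 ph] cmp[OF ps p2] se]
    unfolding \<phi>_def \<psi>_def by simp
qed

end

context ec begin

lemma ds_real:
  assumes rd: "realizes B d A M C x y" and z: "zero_obj B Z"
    and bM: "biproduct B M E SM a1 a2 b1 b2" and bC: "biproduct B C E SC c1 c2 e1 e2"
  shows "realizes B (Pull B e1 d) A SM SC (Cmp B a1 x) (Addm B (Cmp B c1 (Cmp B y b1)) (Cmp B c2 b2))"
proof -
  have bA: "biproduct B A Z A (Idm B A) (Zerom B Z A) (Idm B A) (Zerom B A Z)" by (rule bip_zero[OF z])
  have r2: "realizes B (Zeroe B E Z) Z E E (Zerom B Z E) (Idm B E)"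
    using split_real[OF bip_sym[OF bip_zero[OF z, of E]]] .
  have R: "Real B (Adde B (Push B (Idm B A) (Pull B e1 d)) (Push B (Zerom B Z A) (Pull B e2 (Zeroe B E Z))))
             (Addm B (Cmp B a1 (Cmp B x (Idm B A))) (Cmp B a2 (Cmp B (Zerom B Z E) (Zerom B A Z))))
             (Addm B (Cmp B c1 (Cmp B y b1)) (Cmp B c2 (Cmp B (Idm B E) b2)))"
    using t6[rule_format, OF rd r2 bA bM bC] .
  have dE: "d \<in> Ext B C A" and x: "x \<in> Hom B A M" and y: "y \<in> Hom B M C" using realD[OF rd] by blast+
  note bm = bip[OF bM] and bc = bip[OF bC]
  have a1: "a1 \<in> Hom B M SM" and a2: "a2 \<in> Hom B E SM" and b1: "b1 \<in> Hom B SM M" and b2: "b2 \<in> Hom B SM E"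
    using bm by blast+
  have c1: "c1 \<in> Hom B C SC" and c2: "c2 \<in> Hom B E SC" and e1: "e1 \<in> Hom B SC C" and e2: "e2 \<in> Hom B SC E"
    using bc by blast+
  have pe: "Pull B e1 d \<in> Ext B SC A" using pulle[OF e1 dE] .
  have 1: "Adde B (Push B (Idm B A) (Pull B e1 d)) (Push B (Zerom B Z A) (Pull B e2 (Zeroe B E Z))) = Pull B e1 d"
    using pushid[OF pe] pull0[OF e2] push0[OF zhom] eadd0r[OF pe] by simp
  have 2: "Addm B (Cmp B a1 (Cmp B x (Idm B A))) (Cmp B a2 (Cmp B (Zerom B Z E) (Zerom B A Z))) = Cmp B a1 x"
    using idr[OF x] cmpz1[OF zhom[of Z E], of A] cmpz1[OF a2] add0r[OF cmp[OF x a1]] by simp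
  have 3: "Cmp B (Idm B E) b2 = b2" using idl[OF b2] .
  have yy: "Addm B (Cmp B c1 (Cmp B y b1)) (Cmp B c2 b2) \<in> Hom B SM SC"
    using addh[OF cmp[OF cmp[OF b1 y] c1] cmp[OF b2 c2]] .
  show ?thesis unfolding realizes_def using R 1 2 3 pe cmp[OF x a1] yy by simp
qed

lemma rigid_perp: "rigid B S \<Longrightarrow> S \<subseteq> perp1 B S"
  unfolding rigid_def perp1_def by blast

lemma sub_bip: "subcategory B S \<Longrightarrow> biproduct B A1 A2 T i1 i2 p1 p2 \<Longrightarrow> A1 \<in> S \<Longrightarrow> A2 \<in> S \<Longrightarrow> T \<in> S"
  unfolding subcategory_def by blast

lemma perp_zero: "Y \<in> perp1 B S \<Longrightarrow> X \<in> S \<Longrightarrow> d \<in> Ext B X Y \<Longrightarrow> d = Zeroe B X Y"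
  unfolding perp1_def by blast

lemma bminus:
  assumes rcp: "RCP B S" and ep: "enough_projectives B"
  shows "\<exists>V U x y. conflation B V U Z0 x y \<and> V \<in> perp1 B S \<and> U \<in> S \<inter> perp1 B S"
proof -
  have sub: "subcategory B S" and prS: "{P. projective B P} \<subseteq> S" and rig: "rigid B S"
    and cf: "contravariantly_finite B S" using rcp unfolding RCP_def by blast+
  obtain K P k p where pP: "projective B P" and cp: "conflation B K P Z0 k p"
    using ep unfolding enough_projectives_def by blast
  obtain \<rho> where r\<rho>: "realizes B \<rho> K P Z0 k p" using cp unfolding conflation_def by blast
  obtain U u where US: "U \<in> S" and u: "u \<in> Hom B U Z0"
      and appr: "\<forall>X'\<in>S. \<forall>g\<in>Hom B X' Z0. \<exists>h\<in>Hom B X' U. Cmp B u h = g"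
    using cf unfolding contravariantly_finite_def by blast
  obtain Z where z: "zero_obj B Z" using zero_ex by blast
  obtain S1 a1 a2 b1 b2 where b1S: "biproduct B P U S1 a1 a2 b1 b2" using bip_ex by blast
  obtain S2 c1 c2 e1 e2 where b2S: "biproduct B Z0 U S2 c1 c2 e1 e2" using bip_ex by blast
  note bm = bip[OF b1S] and bc = bip[OF b2S]
  have a1: "a1 \<in> Hom B P S1" and a2: "a2 \<in> Hom B U S1" and b1: "b1 \<in> Hom B S1 P" and b2: "b2 \<in> Hom B S1 U"
    and b1a2: "Cmp B b1 a2 = Zerom B U P" and b2a2: "Cmp B b2 a2 = Idm B U"
    using bm by blast+
  have c1: "c1 \<in> Hom B Z0 S2" and c2: "c2 \<in> Hom B U S2" and e1: "e1 \<in> Hom B S2 Z0" and e2: "e2 \<in> Hom B S2 U"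
    using bc by blast+
  have p: "p \<in> Hom B P Z0" and k: "k \<in> Hom B K P" using realD[OF r\<rho>] by blast+
  define Y0 where "Y0 = Addm B (Cmp B c1 (Cmp B p b1)) (Cmp B c2 b2)"
  have rd: "realizes B (Pull B e1 \<rho>) K S1 S2 (Cmp B a1 k) Y0"
    unfolding Y0_def by (rule ds_real[OF r\<rho> z b1S b2S])
  have nu: "Negm B u \<in> Hom B U Z0" using negh[OF u] .
  define \<psi> where "\<psi> = Addm B (Idm B S2) (Cmp B c1 (Cmp B (Negm B (Negm B u)) e2))"
  define g where "g = Cmp B e1 \<psi>"
  obtain g' where rz: "realizes B (Zeroe B Z0 U) U S2 Z0 g' g"
    using tw_real[OF bip_sym[OF b2S] nu] unfolding g_def \<psi>_def by blast
  obtain Eo h h' d'' where rE: "realizes B d'' Eo S1 Z0 h' h" and hd: "h = Cmp B g Y0"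
    using et4op_rule[OF rd rz] by blast
  have Y0h: "Y0 \<in> Hom B S1 S2" using realD[OF rd] by blast
  have gh: "g \<in> Hom B S2 Z0" using realD[OF rz] by blast
  have "Cmp B Y0 a2 = Addm B (Cmp B (Cmp B c1 (Cmp B p b1)) a2) (Cmp B (Cmp B c2 b2) a2)"
    unfolding Y0_def using distr[OF a2 cmp[OF cmp[OF b1 p] c1] cmp[OF b2 c2]] .
  also have "Cmp B (Cmp B c1 (Cmp B p b1)) a2 = Zerom B U S2"
    using assoc[OF a2 cmp[OF b1 p] c1, symmetric] assoc[OF a2 b1 p, symmetric] b1a2 cmpz1[OF p] cmpz1[OF c1]
    by simp
  also have "Cmp B (Cmp B c2 b2) a2 = c2" using assoc[OF a2 b2 c2, symmetric] b2a2 idr[OF c2] by simp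
  finally have Ya2: "Cmp B Y0 a2 = c2" using add0l[OF c2] by simp
  have "Cmp B h a2 = Cmp B g c2" using hd assoc[OF a2 Y0h gh, symmetric] Ya2 by simp
  also have "\<dots> = Negm B (Negm B u)"
  proof -
    have ps: "\<psi> \<in> Hom B S2 S2" unfolding \<psi>_def
      using addh[OF idm cmp[OF cmp[OF e2 negh[OF nu]] c1]] .
    show ?thesis unfolding g_def using assoc[OF c2 ps e1, symmetric] tw_comp[OF bip_sym[OF b2S] negh[OF nu]]
      unfolding \<psi>_def by simp
  qed
  also have "\<dots> = u" using negneg[OF u] .
  finally have ha2: "Cmp B h a2 = u" .
  have hh: "h \<in> Hom B S1 Z0" and h'h: "h' \<in> Hom B Eo S1" using realD[OF rE] by blast+
  have d''E: "d'' \<in> Ext B Z0 Eo" using realD[OF rE] by blast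
  have PS: "P \<in> S" using prS pP by blast
  have S1S: "S1 \<in> S" using sub_bip[OF sub b1S PS US] .
  have S1p: "S1 \<in> perp1 B S" using rigid_perp[OF rig] S1S by blast
  have Eop: "Eo \<in> perp1 B S"
    unfolding perp1_def
  proof (intro CollectI ballI equalityI subsetI)
    fix C' \<delta> assume C': "C' \<in> S" and dl: "\<delta> \<in> Ext B C' Eo"
    have "Push B h' \<delta> = Zeroe B C' S1" using perp_zero[OF S1p C' pushe[OF h'h dl]] .
    then obtain c where c: "c \<in> Hom B C' Z0" and dc: "\<delta> = Pull B c d''"
      using exact_ext[OF rE dl] by blast
    obtain s where s: "s \<in> Hom B C' U" and us: "Cmp B u s = c" using appr C' c by blast
    have "c = Cmp B h (Cmp B a2 s)" using us ha2 assoc[OF s a2 hh] by simp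
    then have "\<delta> = Pull B (Cmp B a2 s) (Pull B h d'')"
      using dc pullc[OF hh cmp[OF s a2] d''E] by simp
    also have "\<dots> = Zeroe B C' Eo" using pull_defl_zero[OF rE] pull0[OF cmp[OF s a2]] by simp
    finally show "\<delta> \<in> {Zeroe B C' Eo}" by simp
  next
    fix C' \<delta> assume "C' \<in> S" "\<delta> \<in> {Zeroe B C' Eo}"
    then show "\<delta> \<in> Ext B C' Eo" by simp
  qed
  have "conflation B Eo S1 Z0 h' h" unfolding conflation_def using rE by blast
  then show ?thesis using Eop S1S S1p by blast
qed

end


theorem mainTheorem11:
  fixes B :: "('o,'m,'e) extri" and \<C> \<D> :: "'o set" and X Y :: 'o and f :: 'm
  assumes "extriangulated B"
    and "enough_projectives B" and "enough_injectives B"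
    and "RCP B \<D>" and "RCP B \<C>" and "\<D> \<subseteq> \<C>"
    and "X \<in> heart_objs B \<C> (perp1 B \<C>)" and "Y \<in> heart_objs B \<C> (perp1 B \<C>)"
    and "f \<in> Hom B Y X"
    and "quotient_epi B (heart_objs B \<C> (perp1 B \<C>)) \<C> Y X f"
    and "Y \<in> perp1 B \<D>"
  shows "X \<in> perp1 B \<D>"
proof -
  interpret ec B using assms(1) by unfold_locales
  note ep = assms(2) and rcpC = assms(5) and DC = assms(6) and XH = assms(7) and YH = assms(8)
    and f = assms(9) and epi = assms(10) and Yp = assms(11)
  have sub: "subcategory B \<C>" and rig: "rigid B \<C>" using rcpC unfolding RCP_def by blast+
  have Cp: "\<C> \<subseteq> perp1 B \<C>" using rigid_perp[OF rig] .
  obtain VX UX x y where cX: "conflation B X VX UX x y" and VX: "VX \<in> \<C> \<inter> perp1 B \<C>" and UX: "UX \<in> \<C>"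
    using XH unfolding heart_objs_def by blast
  obtain VY UY x' y' where cY: "conflation B Y VY UY x' y'" and VY: "VY \<in> \<C> \<inter> perp1 B \<C>" and UY: "UY \<in> \<C>"
    using YH unfolding heart_objs_def by blast
  obtain \<epsilon> where rX: "realizes B \<epsilon> X VX UX x y" using cX unfolding conflation_def by blast
  obtain \<epsilon>Y where rY: "realizes B \<epsilon>Y Y VY UY x' y'" using cY unfolding conflation_def by blast
  have x: "x \<in> Hom B X VX" and \<epsilon>E: "\<epsilon> \<in> Ext B UX X" using realD[OF rX] by blast+
  have x': "x' \<in> Hom B Y VY" and \<epsilon>YE: "\<epsilon>Y \<in> Ext B UY Y" using realD[OF rY] by blast+
  have "Push B (Cmp B x f) \<epsilon>Y = Zeroe B UY VX"
    using perp_zero[of VX \<C> UY] VX UY pushe[OF cmp[OF f x] \<epsilon>YE] by blast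
  then obtain m where m: "m \<in> Hom B VY VX" and mx: "Cmp B m x' = Cmp B x f"
    using extend_infl[OF rY cmp[OF f x]] by blast
  obtain u where u: "u \<in> Hom B UY UX" and fu: "Push B f \<epsilon>Y = Pull B u \<epsilon>"
    using et3_rule[OF rY rX f m mx] by blast
  obtain Z where z: "zero_obj B Z" using zero_ex by blast
  obtain SM a1 a2 b1 b2 where bSM: "biproduct B VX UY SM a1 a2 b1 b2" using bip_ex by blast
  obtain S c1 c2 e1 e2 where bS: "biproduct B UX UY S c1 c2 e1 e2" using bip_ex by blast
  have e1: "e1 \<in> Hom B S UX" using bip[OF bS] by blast
  have rd: "realizes B (Pull B e1 \<epsilon>) X SM S (Cmp B a1 x) (Addm B (Cmp B c1 (Cmp B y b1)) (Cmp B c2 b2))"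
    by (rule ds_real[OF rX z bSM bS])
  define \<phi> where "\<phi> = Addm B (Idm B S) (Cmp B c1 (Cmp B u e2))"
  obtain gg where rz: "realizes B (Zeroe B UX UY) UY S UX (Cmp B \<phi> c2) gg"
    using tw_real[OF bip_sym[OF bS] u] unfolding \<phi>_def by blast
  have g'h: "Cmp B \<phi> c2 \<in> Hom B UY S" using realD[OF rz] by blast
  have e1g: "Cmp B e1 (Cmp B \<phi> c2) = u" using tw_comp[OF bip_sym[OF bS] u] unfolding \<phi>_def .
  obtain Eo dm e h h' d'' where rE: "realizes B d'' Eo SM UX h' h"
      and r\<theta>0: "realizes B (Pull B (Cmp B \<phi> c2) (Pull B e1 \<epsilon>)) X Eo UY dm e"
    using et4op_rule[OF rd rz] by blast
  have "Pull B (Cmp B \<phi> c2) (Pull B e1 \<epsilon>) = Push B f \<epsilon>Y"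
    using pullc[OF e1 g'h \<epsilon>E, symmetric] e1g fu by simp
  then have r\<theta>: "realizes B (Push B f \<epsilon>Y) X Eo UY dm e" using r\<theta>0 by simp
  have dm: "dm \<in> Hom B X Eo" using realD[OF r\<theta>] by blast
  have SMC: "SM \<in> \<C>" using sub_bip[OF sub bSM] VX UY by blast
  have EoH: "Eo \<in> heart_objs B \<C> (perp1 B \<C>)"
  proof -
    have "\<exists>V U x y. conflation B V U Eo x y \<and> V \<in> perp1 B \<C> \<and> U \<in> \<C> \<inter> perp1 B \<C>"
      using bminus[OF rcpC ep] .
    moreover have "conflation B Eo SM UX h' h" using rE unfolding conflation_def by blast
    ultimately show ?thesis unfolding heart_objs_def using SMC Cp UX by blast
  qed
  have fe: "Push B f \<epsilon>Y = Pull B (Idm B UY) (Push B f \<epsilon>Y)" using pullid[OF pushe[OF f \<epsilon>YE]] by simp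
  obtain b where b: "b \<in> Hom B VY Eo" and bx: "Cmp B b x' = Cmp B dm f"
    using real_prop[OF rY r\<theta> f idm fe] by blast
  have "Addm B (Cmp B dm f) (Negm B (Cmp B (Zerom B X Eo) f)) = Cmp B dm f"
    using cmpz2[OF f] neg0 add0r[OF cmp[OF f dm]] by simp
  then have "factors_through B \<C> Y Eo (Addm B (Cmp B dm f) (Negm B (Cmp B (Zerom B X Eo) f)))"
    unfolding factors_through_def
  proof -
    assume eq: "Addm B (Cmp B dm f) (Negm B (Cmp B (Zerom B X Eo) f)) = Cmp B dm f"
    have "VY \<in> \<C>" using VY by blast
    then show "\<exists>W\<in>\<C>. \<exists>g\<in>Hom B Y W. \<exists>h\<in>Hom B W Eo.
       Addm B (Cmp B dm f) (Negm B (Cmp B (Zerom B X Eo) f)) = Cmp B h g"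
      using x' b eq bx by metis
  qed
  then have "factors_through B \<C> X Eo (Addm B dm (Negm B (Zerom B X Eo)))"
    using epi EoH dm zhom[of X Eo] unfolding quotient_epi_def by blast
  moreover have "Addm B dm (Negm B (Zerom B X Eo)) = dm" using neg0 add0r[OF dm] by simp
  ultimately obtain W j k where W: "W \<in> \<C>" and j: "j \<in> Hom B X W" and k: "k \<in> Hom B W Eo"
      and dmk: "dm = Cmp B k j"
    unfolding factors_through_def by auto
  show ?thesis unfolding perp1_def
  proof (intro CollectI ballI equalityI subsetI)
    fix D' \<delta> assume D': "D' \<in> \<D>" and dl: "\<delta> \<in> Ext B D' X"
    have D'C: "D' \<in> \<C>" using D' DC by blast
    have "Push B j \<delta> = Zeroe B D' W" using perp_zero[OF _ D'C pushe[OF j dl]] Cp W by blast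
    then have "Push B dm \<delta> = Zeroe B D' Eo" using dmk pushc[OF j k dl] push0[OF k] by simp
    then obtain c where c: "c \<in> Hom B D' UY" and dc: "\<delta> = Pull B c (Push B f \<epsilon>Y)"
      using exact_ext[OF r\<theta> dl] by blast
    have "Pull B c \<epsilon>Y = Zeroe B D' Y" using perp_zero[OF Yp D' pulle[OF c \<epsilon>YE]] .
    then have "\<delta> = Zeroe B D' X" using dc pushpull[OF f c \<epsilon>YE] push0[OF f] by simp
    then show "\<delta> \<in> {Zeroe B D' X}" by simp
  next
    fix D' \<delta> assume "D' \<in> \<D>" "\<delta> \<in> {Zeroe B D' X}"
    then show "\<delta> \<in> Ext B D' X" by simp
  qed
qed


end
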